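(* Let $n_1=n_2=2$, let $D_i,a_i,\lambda_i,\chi_i>0$ for $i\in\{1,2\}$ with $\lambda_2>a_2\lambda_1$, and assume (IE). Let $A:=\frac{a_1}{a_2}$, $u_\star:=\frac{\lambda_1+a_1\lambda_2}{1+a_1a_2}$, $v_\star:=\frac{\lambda_2-a_2\lambda_1}{1+a_1a_2}$, and for $\xi_\star>0$ let $\phi_{\xi_\star}(\xi):=\xi-\xi_\star-\xi_\star\ln\frac{\xi}{\xi_\star}$, $\xi>0$. Define $$\mathcal{E}_{1\varepsilon}(t):=\int_\Omega\phi_{u_\star}(u_\varepsilon(\cdot,t))+\frac{u_\star\varepsilon}{6}\int_\Omega\frac{1}{u_\varepsilon^2(\cdot,t)}+A\int_\Omega\phi_{v_\star}(v_\varepsilon(\cdot,t))+\frac{Av_\star\varepsilon}{6}\int_\Omega\frac{1}{v_\varepsilon^2(\cdot,t)},\qquad t\ge0,\ \varepsilon\in(0,1).$$ Then for all $t>0$ and $\varepsilon\in(0,1)$, $$\begin{aligned}&\frac{d}{dt}\mathcal{E}_{1\varepsilon}(t)+\Big\{\frac{D_1u_\star}{2}-\frac{A\chi_2^2v_\star}{2D_2}\|u_\varepsilon(\cdot,t)\|_{L^\infty(\Omega)}^2\Big\}\int_\Omega\frac{u_{\varepsilon x}^2}{u_\varepsilon^2}+\Big\{\frac{AD_2v_\star}{2}-\frac{\chi_1^2u_\star}{2D_1}\|v_\varepsilon(\cdot,t)\|_{L^\infty(\Omega)}^2\Big\}\int_\Omega\frac{v_{\varepsilon x}^2}{v_\varepsilon^2}\\&\quad+\int_\Omega(u_\varepsilon-u_\star)^2+A\int_\Omega(v_\varepsilon-v_\star)^2+u_\star\varepsilon^{\frac{\alpha+2}{2}}\int_\Omega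 u_\varepsilon^{-\alpha-4}u_{\varepsilon x}^2+Av_\star\varepsilon^{\frac{\alpha+2}{2}}\int_\Omega v_\varepsilon^{-\alpha-4}v_{\varepsilon x}^2\\&\le\frac{1+a_1}{2\sqrt3}\sqrt\varepsilon\int_\Omega u_\varepsilon+\frac{A}{2\sqrt3}\sqrt\varepsilon\int_\Omega v_\varepsilon.\end{aligned}$$
   Context: Let $\Omega\subset\mathbb{R}$ be a bounded open interval and fix $\alpha\in(0,\frac12]$. Assumption (IE): $u_0,v_0\in W^{1,2}(\Omega)$ with $u_0>0,v_0>0$ in $\overline\Omega$; for each $\varepsilon\in(0,1)$, $u_{0\varepsilon},v_{0\varepsilon}\in C^5(\overline\Omega)$ with $u_{0\varepsilon x}=u_{0\varepsilon xxx}=v_{0\varepsilon x}=v_{0\varepsilon xxx}=0$ on $\partial\Omega$; $\frac12\inf_\Omega u_0\le u_{0\varepsilon}\le u_0+1$, $\frac12\inf_\Omega v_0\le v_{0\varepsilon}\le v_0+1$ in $\Omega$; $\int_\Omega u_{0\varepsilon x}^2\le\int_\Omega u_{0x}^2+1$, $\int_\Omega v_{0\varepsilon x}^2\le\int_\Omega v_{0x}^2+1$; $u_{0\varepsilon}\to u_0$, $v_{0\varepsilon}\to v_0$ a.e. as $\varepsilon\searrow0$. $(u_\varepsilon,v_\varepsilon)$ is the global positive classical solution of the approximating problem $u_t=-\varepsilon\big(\frac{u^4}{u^{4-n_1}+\varepsilon}u_{xxx}\big)_x+\varepsilon^{\alpha/2}(u^{-\alpha}u_x)_x+D_1u_{xx}-\chi_1\big(\frac{u^{5-n_1}}{u^{4-n_1}+\varepsilon}v_x\big)_x+\frac{3u^3}{3u^2+\varepsilon}(\lambda_1-u+a_1v)$,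 $v_t=-\varepsilon\big(\frac{v^4}{v^{4-n_2}+\varepsilon}v_{xxx}\big)_x+\varepsilon^{\alpha/2}(v^{-\alpha}v_x)_x+D_2v_{xx}+\chi_2\big(\frac{v^{5-n_2}}{v^{4-n_2}+\varepsilon}u_x\big)_x+\frac{3v^3}{3v^2+\varepsilon}(\lambda_2-v-a_2u)$ in $\Omega\times(0,\infty)$, $u_x=v_x=u_{xxx}=v_{xxx}=0$ on $\partial\Omega$, $u(\cdot,0)=u_{0\varepsilon}$, $v(\cdot,0)=v_{0\varepsilon}$ (global for $n_1,n_2\in[1,2]$). *)

theory Defs
  imports "HOL-Analysis.Analysis"
begin

definition phi :: "real \<Rightarrow> real \<Rightarrow> real" where
  "phi s \<xi> = \<xi> - s - s * ln (\<xi> / s)"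

text \<open>W^{1,2}(a,b) in one dimension: f (continuous representative on [a,b]) is an
  indefinite integral of g, and g is square integrable; g is the weak derivative.\<close>
definition W12 :: "real \<Rightarrow> real \<Rightarrow> (real \<Rightarrow> real) \<Rightarrow> (real \<Rightarrow> real) \<Rightarrow> bool" where
  "W12 a b f g \<longleftrightarrow> g integrable_on {a..b} \<and> (\<lambda>x. (g x)^2) integrable_on {a..b} \<and>
     (\<forall>x\<in>{a..b}. f x = f a + integral {a..x} g)"

definition Ck_on :: "nat \<Rightarrow> real \<Rightarrow> real \<Rightarrow> (nat \<Rightarrow> real \<Rightarrow> real) \<Rightarrow> bool" where
  "Ck_on k a b D \<longleftrightarrow>
     (\<forall>j<k. \<forall>x\<in>{a..b}. (D j has_real_derivative D (Suc j) x) (at x within {a..b})) \<and>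
     (\<forall>j\<le>k. continuous_on {a..b} (D j))"

text \<open>Classical regularity u in C^{4,1}(closure Omega x (0,inf)) cap C^0(closure Omega x [0,inf)),
  with the given partial derivative functions (x-derivatives one-sided at the boundary).\<close>
definition classical_C41 ::
  "real \<Rightarrow> real \<Rightarrow> (real \<Rightarrow> real \<Rightarrow> real) \<Rightarrow> (real \<Rightarrow> real \<Rightarrow> real) \<Rightarrow> (real \<Rightarrow> real \<Rightarrow> real)
   \<Rightarrow> (real \<Rightarrow> real \<Rightarrow> real) \<Rightarrow> (real \<Rightarrow> real \<Rightarrow> real) \<Rightarrow> (real \<Rightarrow> real \<Rightarrow> real) \<Rightarrow> bool" where
  "classical_C41 a b u ux uxx uxxx uxxxx ut \<longleftrightarrow>
     continuous_on ({a..b} \<times> {0..}) (\<lambda>(x,t). u x t) \<and>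
     continuous_on ({a..b} \<times> {0<..}) (\<lambda>(x,t). ux x t) \<and>
     continuous_on ({a..b} \<times> {0<..}) (\<lambda>(x,t). uxx x t) \<and>
     continuous_on ({a..b} \<times> {0<..}) (\<lambda>(x,t). uxxx x t) \<and>
     continuous_on ({a..b} \<times> {0<..}) (\<lambda>(x,t). uxxxx x t) \<and>
     continuous_on ({a..b} \<times> {0<..}) (\<lambda>(x,t). ut x t) \<and>
     (\<forall>t>0. \<forall>x\<in>{a..b}.
        ((\<lambda>y. u y t) has_real_derivative ux x t) (at x within {a..b}) \<and>
        ((\<lambda>y. ux y t) has_real_derivative uxx x t) (at x within {a..b}) \<and>
        ((\<lambda>y. uxx y t) has_real_derivative uxxx x t) (at x within {a..b}) \<and>
        ((\<lambda>y. uxxx y t) has_real_derivative uxxxx x t) (at x within {a..b}) \<and>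
        ((\<lambda>s. u x s) has_real_derivative ut x t) (at t))"

definition IE_data :: "real \<Rightarrow> real \<Rightarrow> (real \<Rightarrow> real) \<Rightarrow> (real \<Rightarrow> real) \<Rightarrow> (real \<Rightarrow> real \<Rightarrow> real) \<Rightarrow> bool" where
  "IE_data a b f0 f0x f0e \<longleftrightarrow>
     W12 a b f0 f0x \<and> (\<forall>x\<in>{a..b}. f0 x > 0) \<and>
     (\<forall>e\<in>{0<..<1}. \<exists>D. Ck_on 5 a b D \<and> D 0 = f0e e \<and>
        D 1 a = 0 \<and> D 1 b = 0 \<and> D 3 a = 0 \<and> D 3 b = 0 \<and>
        (\<forall>x\<in>{a<..<b}. Inf (f0 ` {a<..<b}) / 2 \<le> f0e e x \<and> f0e e x \<le> f0 x + 1) \<and>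
        integral {a..b} (\<lambda>x. (D 1 x)^2) \<le> integral {a..b} (\<lambda>x. (f0x x)^2) + 1) \<and>
     (AE x in lborel. x \<in> {a<..<b} \<longrightarrow> ((\<lambda>e. f0e e x) \<longlongrightarrow> f0 x) (at_right 0))"

end

theory Submission imports Defs begin

lemma kbound:
  fixes e U :: real assumes "e > 0" "U > 0"
  shows "e * U / (3 * U^2 + e) \<le> sqrt e / (2 * sqrt 3)"
proof -
  define s where "s = sqrt e"
  define r where "r = sqrt (3::real)"
  have s: "s > 0" "s^2 = e" using assms by (auto simp: s_def)
  have r: "r > 0" "r^2 = 3" by (auto simp: r_def)
  have "0 \<le> s * (r * U - s)^2" using s by simp
  then have "2 * r * s^2 * U \<le> s * (r^2 * U^2 + s^2)"
    by (simp add: power2_eq_square algebra_simps)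
  then have "2 * r * e * U \<le> s * (3 * U^2 + e)" using s r by simp
  moreover have "3 * U^2 + e > 0" using assms by (simp add: add_pos_pos)
  ultimately show ?thesis
    using r s assms unfolding s_def[symmetric] r_def[symmetric]
    by (simp add: divide_simps) (simp add: algebra_simps)
qed

lemma reaction:
  fixes U V e us vs lam1 lam2 a1 a2 A :: real
  assumes U: "U > 0" and V: "V > 0" and e: "e > 0" and a1: "a1 > 0" and a2: "a2 > 0"
    and lam1: "lam1 > 0" and l2: "lam2 > a2 * lam1"
    and A: "A = a1 / a2"
    and us: "us = (lam1 + a1 * lam2) / (1 + a1 * a2)"
    and vs: "vs = (lam2 - a2 * lam1) / (1 + a1 * a2)"
  shows "(1 - us / U - us * e / (3 * U^3)) * (3 * U^3 / (3 * U^2 + e)) * (lam1 - U + a1 * V)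
       + A * ((1 - vs / V - vs * e / (3 * V^3)) * (3 * V^3 / (3 * V^2 + e)) * (lam2 - V - a2 * U))
       + (U - us)^2 + A * (V - vs)^2
     \<le> (1 + a1) / (2 * sqrt 3) * sqrt e * U + A / (2 * sqrt 3) * sqrt e * V"
proof -
  define ku where "ku = e * U / (3 * U^2 + e)"
  define kv where "kv = e * V / (3 * V^2 + e)"
  define c where "c = sqrt e / (2 * sqrt 3)"
  have d1: "3 * U^2 + e > 0" "3 * V^2 + e > 0" using e by (auto intro: add_nonneg_pos)
  have g1: "(1 - us / U - us * e / (3 * U^3)) * (3 * U^3 / (3 * U^2 + e)) = U - ku - us"
  proof -
    have 1: "1 - us / U - us * e / (3 * U^3) = (3*U^3 - us * (3*U^2+e)) / (3*U^3)"
      using U by (simp add: field_simps power2_eq_square power3_eq_cube)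
    have 2: "U - ku - us = (3*U^3 - us * (3*U^2+e)) / (3 * U^2 + e)"
      using d1 by (simp add: ku_def field_simps power2_eq_square power3_eq_cube)
    show ?thesis unfolding 1 2 using U d1 by simp
  qed
  have g2: "(1 - vs / V - vs * e / (3 * V^3)) * (3 * V^3 / (3 * V^2 + e)) = V - kv - vs"
  proof -
    have 1: "1 - vs / V - vs * e / (3 * V^3) = (3*V^3 - vs * (3*V^2+e)) / (3*V^3)"
      using V by (simp add: field_simps power2_eq_square power3_eq_cube)
    have 2: "V - kv - vs = (3*V^3 - vs * (3*V^2+e)) / (3 * V^2 + e)"
      using d1 by (simp add: kv_def field_simps power2_eq_square power3_eq_cube)
    show ?thesis unfolding 1 2 using V d1 by simp
  qed
  have den: "1 + a1 * a2 > 0" using a1 a2 by (simp add: add_pos_pos)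
  have den': "1 + a1 * a2 \<noteq> 0" using den by simp
  have usd: "us * (1 + a1 * a2) = lam1 + a1 * lam2" using den' unfolding us by simp
  have vsd: "vs * (1 + a1 * a2) = lam2 - a2 * lam1" using den' unfolding vs by simp
  have "(us - a1 * vs) * (1 + a1 * a2) = us * (1 + a1 * a2) - a1 * (vs * (1 + a1 * a2))"
    by (simp add: algebra_simps)
  also have "\<dots> = lam1 * (1 + a1 * a2)" unfolding usd vsd by (simp add: algebra_simps)
  finally have l1e: "lam1 = us - a1 * vs" using den' by simp
  have "(vs + a2 * us) * (1 + a1 * a2) = vs * (1 + a1 * a2) + a2 * (us * (1 + a1 * a2))"
    by (simp add: algebra_simps)
  also have "\<dots> = lam2 * (1 + a1 * a2)" unfolding usd vsd by (simp add: algebra_simps)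
  finally have l2e: "lam2 = vs + a2 * us" using den' by simp
  have Aa: "A * a2 = a1" using a2 unfolding A by simp
  have A0: "A > 0" using a1 a2 A by simp
  have ku0: "ku \<ge> 0" "kv \<ge> 0" using U V e d1 by (auto simp: ku_def kv_def)
  have kuc: "ku \<le> c" "kv \<le> c" unfolding ku_def kv_def c_def using kbound e U V by auto
  have vs0: "vs > 0" unfolding vs using den l2 by simp
  have key: "(U - ku - us) * (lam1 - U + a1 * V) + A * ((V - kv - vs) * (lam2 - V - a2 * U))
       + (U - us)^2 + A * (V - vs)^2
     = - ku * (lam1 + a1 * V) + ku * U - A * kv * lam2 + A * kv * V + a1 * kv * U"
    unfolding l1e l2e using Aa
    by (simp add: algebra_simps power2_eq_square) (simp add: Aa[symmetric] algebra_simps)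
  have "ku * (lam1 + a1 * V) \<ge> 0" using ku0 lam1 a1 V by simp
  moreover have "A * kv * lam2 \<ge> 0" using A0 ku0 lam1 l2 a2
    by (metis less_eq_real_def mult_nonneg_nonneg mult_pos_pos order.strict_trans1 zero_le_mult_iff)
  moreover have "ku * U \<le> c * U" using kuc U by (simp add: mult_right_mono)
  moreover have "A * kv * V \<le> A * c * V" using kuc V A0 by (simp add: mult_right_mono mult_left_mono)
  moreover have "a1 * kv * U \<le> a1 * c * U" using kuc U a1 by (simp add: mult_right_mono mult_left_mono)
  ultimately have "- ku * (lam1 + a1 * V) + ku * U - A * kv * lam2 + A * kv * V + a1 * kv * U
      \<le> (1 + a1) * c * U + A * c * V" by (simp add: algebra_simps)
  moreover have "(1 + a1) * c * U + A * c * V = (1 + a1) / (2 * sqrt 3) * sqrt e * U + A / (2 * sqrt 3) * sqrt e * V"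
    unfolding c_def by simp
  ultimately show ?thesis unfolding g1 g2 using key by linarith
qed

lemma diffeq:
  fixes U Ux Uxxx W e p q us D c :: real
  assumes U: "U > 0" and e: "e > 0"
  shows "- ((us / U^2 + us * e / U^4) * Ux * (- e * (U^4 / (U^2 + e) * Uxxx) + p * (q * Ux) + D * Ux + c * (U^3 / (U^2 + e) * W)) + us * e * (Ux * Uxxx))
    = - us * p * q * (Ux^2 / U^2) - us * (p * e) * (q / U^4 * Ux^2) - us * D * (Ux^2 / U^2) - us * D * e * (Ux^2 / U^4) - us * c * (Ux * W / U)"
proof -
  have d: "U^2 + e > 0" using U e by (simp add: add_pos_pos)
  have 1: "(us / U^2 + us * e / U^4) = us * (U^2 + e) / U^4"
    using U by (simp add: field_simps power2_eq_square power4_eq_xxxx)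
  define H where "H = us * (U^2 + e) / U^4 * Ux"
  have gen: "y \<noteq> 0 \<Longrightarrow> z \<noteq> 0 \<Longrightarrow> us * y / z * Ux * (- e * (z / y * Uxxx)) = - us * e * (Ux * Uxxx)" for y z :: real
    by (simp add: field_simps)
  have t1: "H * (- e * (U^4 / (U^2 + e) * Uxxx)) = - us * e * (Ux * Uxxx)"
    unfolding H_def using U d by (intro gen) auto
  have t2: "H * (p * (q * Ux)) = us * p * q * (Ux^2 / U^2) + us * (p * e) * (q / U^4 * Ux^2)"
    unfolding H_def using U d by (simp add: field_simps power2_eq_square power4_eq_xxxx)
  have t3: "H * (D * Ux) = us * D * (Ux^2 / U^2) + us * D * e * (Ux^2 / U^4)"
    unfolding H_def using U d by (simp add: field_simps power2_eq_square power4_eq_xxxx)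
  have gen2: "y \<noteq> 0 \<Longrightarrow> w \<noteq> 0 \<Longrightarrow> U \<noteq> 0 \<Longrightarrow> us * y / (w * U) * Ux * (c * (w / y * W)) = us * c * (Ux * W / U)" for y w :: real
    by (simp add: field_simps)
  have U4: "U^4 = U^3 * U" by (simp add: power3_eq_cube power4_eq_xxxx)
  have t4: "H * (c * (U^3 / (U^2 + e) * W)) = us * c * (Ux * W / U)"
    unfolding H_def U4 using U d by (intro gen2) auto
  have "(us / U^2 + us * e / U^4) * Ux * (- e * (U^4 / (U^2 + e) * Uxxx) + p * (q * Ux) + D * Ux + c * (U^3 / (U^2 + e) * W))
     = H * (- e * (U^4 / (U^2 + e) * Uxxx)) + H * (p * (q * Ux)) + H * (D * Ux) + H * (c * (U^3 / (U^2 + e) * W))"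
    unfolding 1 H_def[symmetric] by (simp only: distrib_left)
  then show ?thesis unfolding t1 t2 t3 t4 by simp
qed

lemma young:
  fixes U V Ux Vx S us c D :: real
  assumes U: "U > 0" and V: "V > 0" and D: "D > 0" and us: "us > 0" and S: "V^2 \<le> S^2"
  shows "us * c * (Ux * Vx / U) \<le> us * D / 2 * (Ux^2 / U^2) + c^2 * us / (2 * D) * S^2 * (Vx^2 / V^2)"
proof -
  define X where "X = Ux / U"
  have "0 \<le> (D * X - c * Vx)^2" by simp
  then have "2 * D * (c * X * Vx) \<le> D^2 * X^2 + c^2 * Vx^2"
    by (simp add: power2_eq_square algebra_simps)
  then have "c * X * Vx \<le> D / 2 * X^2 + c^2 / (2 * D) * Vx^2"
    using D by (simp add: field_simps power2_eq_square)
  moreover have "Vx^2 = V^2 * (Vx^2 / V^2)" using V by simp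
  moreover have "V^2 * (Vx^2 / V^2) \<le> S^2 * (Vx^2 / V^2)"
    using S by (intro mult_right_mono) auto
  ultimately have "c * X * Vx \<le> D / 2 * X^2 + c^2 / (2 * D) * (S^2 * (Vx^2 / V^2))"
    using D by (smt (verit) divide_nonneg_nonneg mult_left_mono zero_le_power2)
  then have "us * (c * X * Vx) \<le> us * (D / 2 * X^2 + c^2 / (2 * D) * (S^2 * (Vx^2 / V^2)))"
    using us by (simp add: mult_left_mono)
  then show ?thesis unfolding X_def using U by (simp add: algebra_simps power_divide)
qed

lemma abstract:
  fixes X1 X3 S1 S2 RR Qu Qv us p qu w1 w2 w3 D1 e chi1 m vs qv z1 z2 z3 D2 chi2 m' A Su Sv :: real
  assumes R: "X1 + A * X3 + S1 + A * S2 \<le> RR"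
    and DU: "- Qu = - us * p * qu * w1 - us * (p * e) * w2 - us * D1 * w1 - us * D1 * e * w3 - us * (-chi1) * m"
    and DV: "- Qv = - vs * p * qv * z1 - vs * (p * e) * z2 - vs * D2 * z1 - vs * D2 * e * z3 - vs * chi2 * m'"
    and YU: "us * chi1 * m \<le> us * D1 / 2 * w1 + chi1^2 * us / (2 * D1) * Sv^2 * z1"
    and YV: "vs * (-chi2) * m' \<le> vs * D2 / 2 * z1 + (-chi2)^2 * vs / (2 * D2) * Su^2 * w1"
    and A0: "A > 0"
    and nn: "0 \<le> us * p * qu * w1" "0 \<le> us * D1 * e * w3" "0 \<le> vs * p * qv * z1" "0 \<le> vs * D2 * e * z3"
  shows "X1 - Qu + A * (X3 - Qv) + (D1 * us / 2 - A * chi2^2 * vs / (2 * D2) * Su^2) * w1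
    + (A * D2 * vs / 2 - chi1^2 * us / (2 * D1) * Sv^2) * z1 + S1 + A * S2
    + us * (p * e) * w2 + A * vs * (p * e) * z2 \<le> RR"
proof -
  have YV': "A * (vs * (-chi2) * m') \<le> A * (vs * D2 / 2 * z1 + (-chi2)^2 * vs / (2 * D2) * Su^2 * w1)"
    using mult_left_mono[OF YV, of A] A0 by linarith
  have n2: "0 \<le> A * (vs * p * qv * z1)" "0 \<le> A * (vs * D2 * e * z3)" using nn A0 by auto
  have Qu: "Qu = us * p * qu * w1 + us * (p * e) * w2 + us * D1 * w1 + us * D1 * e * w3 + us * (-chi1) * m"
    using DU by linarith
  have Qv: "Qv = vs * p * qv * z1 + vs * (p * e) * z2 + vs * D2 * z1 + vs * D2 * e * z3 + vs * chi2 * m'"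
    using DV by linarith
  show ?thesis unfolding Qu Qv using R YU YV' n2 nn
    by (simp add: algebra_simps)
qed

lemma pointwise:
  fixes U Ux Uxxx V Vx Vxxx Su Sv e \<alpha> D1 D2 a1 a2 lam1 lam2 chi1 chi2 A us vs :: real
  assumes U: "U > 0" and V: "V > 0" and e: "e > 0"
    and pos: "D1 > 0" "D2 > 0" "a1 > 0" "a2 > 0" "lam1 > 0" "lam2 > 0" "chi1 > 0" "chi2 > 0"
    and lam: "lam2 > a2 * lam1"
    and A_def: "A = a1 / a2"
    and us_def: "us = (lam1 + a1 * lam2) / (1 + a1 * a2)"
    and vs_def: "vs = (lam2 - a2 * lam1) / (1 + a1 * a2)"
    and Su: "U^2 \<le> Su^2" and Sv: "V^2 \<le> Sv^2"
  shows "(1 - us/U - us * e/(3 * U^3)) * (3 * U^3/(3 * U^2+e)) * (lam1 - U + a1 * V)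
    - ((us/U^2 + us * e/U^4) * Ux * (-e * (U^4/(U^2+e) * Uxxx) + e powr (\<alpha>/2) * (U powr (-\<alpha>) * Ux) + D1 * Ux - chi1 * (U^3/(U^2+e) * Vx)) + us * e * (Ux * Uxxx))
    + A * ((1 - vs/V - vs * e/(3 * V^3)) * (3 * V^3/(3 * V^2+e)) * (lam2 - V - a2 * U)
    - ((vs/V^2 + vs * e/V^4) * Vx * (-e * (V^4/(V^2+e) * Vxxx) + e powr (\<alpha>/2) * (V powr (-\<alpha>) * Vx) + D2 * Vx + chi2 * (V^3/(V^2+e) * Ux)) + vs * e * (Vx * Vxxx)))
    + (D1 * us/2 - A * chi2^2 * vs/(2 * D2) * Su^2) * (Ux^2/U^2)
    + (A * D2 * vs/2 - chi1^2 * us/(2 * D1) * Sv^2) * (Vx^2/V^2)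
    + (U-us)^2 + A * (V-vs)^2
    + us * e powr ((\<alpha>+2)/2) * (U powr (-\<alpha>-4) * Ux^2)
    + A * vs * e powr ((\<alpha>+2)/2) * (V powr (-\<alpha>-4) * Vx^2)
    \<le> (1+a1)/(2 * sqrt 3) * sqrt e * U + A/(2 * sqrt 3) * sqrt e * V"
proof -
  define p where "p = e powr (\<alpha>/2)"
  define qu where "qu = U powr (-\<alpha>)"
  define qv where "qv = V powr (-\<alpha>)"
  have p0: "p > 0" "qu > 0" "qv > 0" using e U V by (auto simp: p_def qu_def qv_def)
  have ep: "e powr ((\<alpha>+2)/2) = p * e"
  proof -
    have "e powr ((\<alpha>+2)/2) = e powr (\<alpha>/2 + 1)" by (simp add: add_divide_distrib)
    also have "\<dots> = e powr (\<alpha>/2) * e powr 1" by (rule powr_add)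
    also have "\<dots> = p * e" using e by (simp add: p_def)
    finally show ?thesis .
  qed
  have Uq: "U powr (-\<alpha>-4) = qu / U^4"
    using U by (simp add: qu_def powr_diff powr_realpow)
  have Vq: "V powr (-\<alpha>-4) = qv / V^4"
    using V by (simp add: qv_def powr_diff powr_realpow)
  have den: "1 + a1 * a2 > 0" using pos by (simp add: add_pos_pos)
  have us0: "us > 0" unfolding us_def using den pos by (simp add: add_pos_pos)
  have vs0: "vs > 0" unfolding vs_def using den lam by simp
  have A0: "A > 0" using pos A_def by simp
  have R: "(1 - us / U - us * e / (3 * U^3)) * (3 * U^3 / (3 * U^2 + e)) * (lam1 - U + a1 * V)
       + A * ((1 - vs / V - vs * e / (3 * V^3)) * (3 * V^3 / (3 * V^2 + e)) * (lam2 - V - a2 * U))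
       + (U - us)^2 + A * (V - vs)^2
     \<le> (1 + a1) / (2 * sqrt 3) * sqrt e * U + A / (2 * sqrt 3) * sqrt e * V"
    by (rule reaction[OF U V e pos(3,4,5) lam A_def us_def vs_def])
  have F1: "(-e * (U^4/(U^2+e) * Uxxx) + p * (qu * Ux) + D1 * Ux - chi1 * (U^3/(U^2+e) * Vx))
      = (-e * (U^4/(U^2+e) * Uxxx) + p * (qu * Ux) + D1 * Ux + (-chi1) * (U^3/(U^2+e) * Vx))" by simp
  have DU: "- ((us / U^2 + us * e / U^4) * Ux * (-e * (U^4 / (U^2 + e) * Uxxx) + p * (qu * Ux) + D1 * Ux - chi1 * (U^3 / (U^2 + e) * Vx)) + us * e * (Ux * Uxxx))
    = - us * p * qu * (Ux^2 / U^2) - us * (p * e) * (qu / U^4 * Ux^2) - us * D1 * (Ux^2 / U^2) - us * D1 * e * (Ux^2 / U^4) - us * (-chi1) * (Ux * Vx / U)"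
    unfolding F1 by (rule diffeq[OF U e])
  have DV: "- ((vs / V^2 + vs * e / V^4) * Vx * (-e * (V^4 / (V^2 + e) * Vxxx) + p * (qv * Vx) + D2 * Vx + chi2 * (V^3 / (V^2 + e) * Ux)) + vs * e * (Vx * Vxxx))
    = - vs * p * qv * (Vx^2 / V^2) - vs * (p * e) * (qv / V^4 * Vx^2) - vs * D2 * (Vx^2 / V^2) - vs * D2 * e * (Vx^2 / V^4) - vs * chi2 * (Vx * Ux / V)"
    by (rule diffeq[OF V e])
  have YU: "us * chi1 * (Ux * Vx / U) \<le> us * D1 / 2 * (Ux^2 / U^2) + chi1^2 * us / (2 * D1) * Sv^2 * (Vx^2 / V^2)"
    by (rule young[OF U V pos(1) us0 Sv])
  have YV: "vs * (-chi2) * (Vx * Ux / V) \<le> vs * D2 / 2 * (Vx^2 / V^2) + (-chi2)^2 * vs / (2 * D2) * Su^2 * (Ux^2 / U^2)"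
    by (rule young[OF V U pos(2) vs0 Su])
  have nn: "0 \<le> us * p * qu * (Ux^2 / U^2)" "0 \<le> us * D1 * e * (Ux^2 / U^4)"
     "0 \<le> vs * p * qv * (Vx^2 / V^2)" "0 \<le> vs * D2 * e * (Vx^2 / V^4)"
    using us0 vs0 p0 pos e A0 U V by auto
  show ?thesis
    unfolding p_def[symmetric] qu_def[symmetric] qv_def[symmetric] ep Uq Vq
    by (rule abstract[OF R DU DV YU YV A0 nn])
qed

lemma leib:
  fixes w wt :: "real \<Rightarrow> real \<Rightarrow> real" and \<Phi> \<Phi>' :: "real \<Rightarrow> real"
  assumes cw: "continuous_on ({a..b} \<times> {0<..}) (\<lambda>(x,t). w x t)"
    and cwt: "continuous_on ({a..b} \<times> {0<..}) (\<lambda>(x,t). wt x t)"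
    and dw: "\<And>x s. x \<in> {a..b} \<Longrightarrow> s > 0 \<Longrightarrow> ((\<lambda>s. w x s) has_real_derivative wt x s) (at s)"
    and wpos: "\<And>x s. x \<in> {a..b} \<Longrightarrow> s > 0 \<Longrightarrow> w x s > 0"
    and dP: "\<And>y. y > 0 \<Longrightarrow> (\<Phi> has_real_derivative \<Phi>' y) (at y)"
    and cP: "continuous_on {0<..} \<Phi>'"
    and t0: "t0 > 0"
  shows "((\<lambda>s. integral {a..b} (\<lambda>x. \<Phi> (w x s))) has_real_derivative
           integral {a..b} (\<lambda>x. \<Phi>' (w x t0) * wt x t0)) (at t0)"
proof -
  have cP0: "continuous_on {0<..} \<Phi>"
    using dP by (meson DERIV_isCont continuous_at_imp_continuous_on greaterThan_iff)
  have "continuous_on ({0<..} \<times> {a..b}) (\<lambda>p. (\<lambda>(x,t). w x t) (snd p, fst p))"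
    by (rule continuous_on_compose2[OF cw]) (auto intro!: continuous_intros)
  then have sw: "continuous_on ({0<..} \<times> {a..b}) (\<lambda>p. w (snd p) (fst p))"
    by simp
  have "continuous_on ({0<..} \<times> {a..b}) (\<lambda>p. (\<lambda>(x,t). wt x t) (snd p, fst p))"
    by (rule continuous_on_compose2[OF cwt]) (auto intro!: continuous_intros)
  then have swt: "continuous_on ({0<..} \<times> {a..b}) (\<lambda>p. wt (snd p) (fst p))"
    by simp
  have c1: "continuous_on ({0<..} \<times> {a..b}) (\<lambda>p. \<Phi>' (w (snd p) (fst p)))"
    by (rule continuous_on_compose2[OF cP sw]) (auto intro: wpos)
  have c2: "continuous_on ({0<..} \<times> {a..b}) (\<lambda>p. \<Phi> (w (snd p) (fst p)))"
    by (rule continuous_on_compose2[OF cP0 sw]) (auto intro: wpos)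
  have "((\<lambda>s. integral (cbox a b) (\<lambda>x. \<Phi> (w x s))) has_field_derivative
           integral (cbox a b) (\<lambda>x. \<Phi>' (w x t0) * wt x t0)) (at t0 within {0<..})"
  proof (rule leibniz_rule_field_derivative[where f = "\<lambda>s x. \<Phi> (w x s)" and fx = "\<lambda>s x. \<Phi>' (w x s) * wt x s"])
    fix s x :: real assume "s \<in> {0<..}" "x \<in> cbox a b"
    then show "((\<lambda>s. \<Phi> (w x s)) has_field_derivative \<Phi>' (w x s) * wt x s) (at s within {0<..})"
      using DERIV_chain2[OF dP[OF wpos] dw, of x s] by (auto intro: has_field_derivative_at_within)
  next
    fix s :: real assume s: "s \<in> {0<..}"
    have "continuous_on {a..b} (\<lambda>x. \<Phi> (w (snd (s,x)) (fst (s,x))))"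
      by (rule continuous_on_compose2[OF c2]) (use s in \<open>auto intro!: continuous_intros\<close>)
    then show "(\<lambda>x. \<Phi> (w x s)) integrable_on cbox a b"
      by (simp add: integrable_continuous_real)
  next
    show "continuous_on ({0<..} \<times> cbox a b) (\<lambda>(s, x). \<Phi>' (w x s) * wt x s)"
      using continuous_on_mult[OF c1 swt] by (simp add: split_beta)
  qed (use t0 in simp_all)
  moreover have "at t0 within {0<..} = at t0"
    using t0 by (intro at_within_open) auto
  ultimately show ?thesis
    unfolding cbox_interval by simp
qed

lemma ibp0:
  fixes f f' g g' :: "real \<Rightarrow> real"
  assumes ab: "a \<le> b"
   and df: "\<And>x. x \<in> {a..b} \<Longrightarrow> (f has_real_derivative f' x) (at x within {a..b})"
   and dg: "\<And>x. x \<in> {a..b} \<Longrightarrow> (g has_real_derivative g' x) (at x within {a..b})"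
   and i1: "(\<lambda>x. f' x * g x) integrable_on {a..b}" and i2: "(\<lambda>x. f x * g' x) integrable_on {a..b}"
   and bd: "f a * g a = 0" "f b * g b = 0"
  shows "integral {a..b} (\<lambda>x. f x * g' x) = - integral {a..b} (\<lambda>x. f' x * g x)"
proof -
  have "((\<lambda>x. f' x * g x + f x * g' x) has_integral (f b * g b - f a * g a)) {a..b}"
  proof (rule fundamental_theorem_of_calculus[OF ab])
    fix x assume x: "x \<in> {a..b}"
    have "((\<lambda>x. f x * g x) has_real_derivative f x * g' x + f' x * g x) (at x within {a..b})"
      by (rule DERIV_mult'[OF df[OF x] dg[OF x]])
    then show "((\<lambda>x. f x * g x) has_vector_derivative f' x * g x + f x * g' x) (at x within {a..b})"
      by (simp add: has_real_derivative_iff_has_vector_derivative[symmetric] add.commute)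
  qed
  then have "integral {a..b} (\<lambda>x. f' x * g x + f x * g' x) = 0"
    using bd by (simp add: integral_unique)
  then show ?thesis using integral_add[OF i1 i2] by simp
qed

lemma sup_sq:
  fixes f :: "real \<Rightarrow> real"
  assumes ab: "a < b" and c: "continuous_on {a..b} f" and x: "x \<in> {a..b}"
  shows "(f x)^2 \<le> (Sup ((\<lambda>x. \<bar>f x\<bar>) ` {a<..<b}))^2"
proof -
  define S where "S = Sup ((\<lambda>x. \<bar>f x\<bar>) ` {a<..<b})"
  have ca: "continuous_on {a..b} (\<lambda>x. \<bar>f x\<bar>)" using c by (intro continuous_intros)
  have "compact ((\<lambda>x. \<bar>f x\<bar>) ` {a..b})" by (rule compact_continuous_image[OF ca]) simp
  then have "bdd_above ((\<lambda>x. \<bar>f x\<bar>) ` {a..b})" by (intro bounded_imp_bdd_above compact_imp_bounded)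
  then have bd: "bdd_above ((\<lambda>x. \<bar>f x\<bar>) ` {a<..<b})"
    by (rule bdd_above_mono) auto
  have up: "\<bar>f y\<bar> \<le> S" if "y \<in> {a<..<b}" for y
    unfolding S_def by (rule cSUP_upper[OF that bd])
  have cl: "closure {a<..<b} = {a..b}" using ab by (rule closure_greaterThanLessThan)
  have "\<bar>f x\<bar> \<le> S"
    by (rule continuous_le_on_closure[where S = "{a<..<b}"]) (use ca cl x up in auto)
  then have "\<bar>f x\<bar>^2 \<le> S^2" by (intro power_mono) auto
  then show ?thesis unfolding S_def by simp
qed

lemma dHaux: "y \<noteq> 0 \<Longrightarrow> us * d / (y * y) + us * (e * (d * y\<^sup>2)) / y ^ 6 = (us / y\<^sup>2 + us * e / y ^ 4) * (d::real)"
  by (simp add: field_simps eval_nat_numeral)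

lemma hint: "f integrable_on S \<Longrightarrow> (f has_integral integral S f) S"
  by (rule integrable_integral)

lemma core:
  fixes a b \<alpha> D1 D2 a1 a2 lam1 lam2 chi1 chi2 A us vs e :: real
    and U Ux Uxx Uxxx Ut V Vx Vxx Vxxx Vt :: "real \<Rightarrow> real"
  assumes ab: "a < b" and e: "e > 0"
    and pos: "D1 > 0" "D2 > 0" "a1 > 0" "a2 > 0" "lam1 > 0" "lam2 > 0" "chi1 > 0" "chi2 > 0"
    and lam: "lam2 > a2 * lam1"
    and A_def: "A = a1 / a2"
    and us_def: "us = (lam1 + a1 * lam2) / (1 + a1 * a2)"
    and vs_def: "vs = (lam2 - a2 * lam1) / (1 + a1 * a2)"
    and cont: "continuous_on {a..b} U" "continuous_on {a..b} Ux" "continuous_on {a..b} Uxx"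
      "continuous_on {a..b} Uxxx" "continuous_on {a..b} Ut"
      "continuous_on {a..b} V" "continuous_on {a..b} Vx" "continuous_on {a..b} Vxx"
      "continuous_on {a..b} Vxxx" "continuous_on {a..b} Vt"
    and Upos: "\<And>x. x \<in> {a..b} \<Longrightarrow> U x > 0"
    and Vpos: "\<And>x. x \<in> {a..b} \<Longrightarrow> V x > 0"
    and dU: "\<And>x. x \<in> {a..b} \<Longrightarrow> (U has_real_derivative Ux x) (at x within {a..b})"
    and dUx: "\<And>x. x \<in> {a..b} \<Longrightarrow> (Ux has_real_derivative Uxx x) (at x within {a..b})"
    and dUxx: "\<And>x. x \<in> {a..b} \<Longrightarrow> (Uxx has_real_derivative Uxxx x) (at x within {a..b})"
    and dV: "\<And>x. x \<in> {a..b} \<Longrightarrow> (V has_real_derivative Vx x) (at x within {a..b})"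
    and dVx: "\<And>x. x \<in> {a..b} \<Longrightarrow> (Vx has_real_derivative Vxx x) (at x within {a..b})"
    and dVxx: "\<And>x. x \<in> {a..b} \<Longrightarrow> (Vxx has_real_derivative Vxxx x) (at x within {a..b})"
    and pu: "\<And>x. x \<in> {a..b} \<Longrightarrow>
       ((\<lambda>y. - e * ((U y)^4 / ((U y)^2 + e) * Uxxx y)
              + e powr (\<alpha>/2) * ((U y) powr (-\<alpha>) * Ux y)
              + D1 * Ux y
              - chi1 * ((U y)^3 / ((U y)^2 + e) * Vx y))
        has_real_derivative
          (Ut x - 3 * (U x)^3 / (3 * (U x)^2 + e) * (lam1 - U x + a1 * V x)))
       (at x within {a..b})"
    and pv: "\<And>x. x \<in> {a..b} \<Longrightarrow>
       ((\<lambda>y. - e * ((V y)^4 / ((V y)^2 + e) * Vxxx y)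
              + e powr (\<alpha>/2) * ((V y) powr (-\<alpha>) * Vx y)
              + D2 * Vx y
              + chi2 * ((V y)^3 / ((V y)^2 + e) * Ux y))
        has_real_derivative
          (Vt x - 3 * (V x)^3 / (3 * (V x)^2 + e) * (lam2 - V x - a2 * U x)))
       (at x within {a..b})"
    and bc: "Ux a = 0" "Ux b = 0" "Uxxx a = 0" "Uxxx b = 0" "Vx a = 0" "Vx b = 0" "Vxxx a = 0" "Vxxx b = 0"
  shows "(integral {a..b} (\<lambda>x. (1 - us / U x) * Ut x) + us * e / 6 * integral {a..b} (\<lambda>x. - 2 / (U x)^3 * Ut x)
          + A * integral {a..b} (\<lambda>x. (1 - vs / V x) * Vt x) + A * vs * e / 6 * integral {a..b} (\<lambda>x. - 2 / (V x)^3 * Vt x))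
        + (D1 * us / 2 - A * chi2^2 * vs / (2 * D2) * (Sup ((\<lambda>x. \<bar>U x\<bar>) ` {a<..<b}))^2)
            * integral {a..b} (\<lambda>x. (Ux x)^2 / (U x)^2)
        + (A * D2 * vs / 2 - chi1^2 * us / (2 * D1) * (Sup ((\<lambda>x. \<bar>V x\<bar>) ` {a<..<b}))^2)
            * integral {a..b} (\<lambda>x. (Vx x)^2 / (V x)^2)
        + integral {a..b} (\<lambda>x. (U x - us)^2) + A * integral {a..b} (\<lambda>x. (V x - vs)^2)
        + us * e powr ((\<alpha> + 2) / 2) * integral {a..b} (\<lambda>x. (U x) powr (-\<alpha> - 4) * (Ux x)^2)
        + A * vs * e powr ((\<alpha> + 2) / 2) * integral {a..b} (\<lambda>x. (V x) powr (-\<alpha> - 4) * (Vx x)^2)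
     \<le> (1 + a1) / (2 * sqrt 3) * sqrt e * integral {a..b} (\<lambda>x. U x)
        + A / (2 * sqrt 3) * sqrt e * integral {a..b} (\<lambda>x. V x)"
proof -
  note cont[continuous_intros]
  have ne: "\<And>x. x \<in> {a..b} \<Longrightarrow> U x \<noteq> 0" "\<And>x. x \<in> {a..b} \<Longrightarrow> V x \<noteq> 0"
    using Upos Vpos by force+
  have ne2: "\<And>x. x \<in> {a..b} \<Longrightarrow> (U x)^2 + e \<noteq> 0" "\<And>x. x \<in> {a..b} \<Longrightarrow> (V x)^2 + e \<noteq> 0"
    "\<And>x. x \<in> {a..b} \<Longrightarrow> 3 * (U x)^2 + e \<noteq> 0" "\<And>x. x \<in> {a..b} \<Longrightarrow> 3 * (V x)^2 + e \<noteq> 0"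
    using e by (smt (verit) zero_le_power2)+
  define F where "F = (\<lambda>y. - e * ((U y)^4 / ((U y)^2 + e) * Uxxx y)
              + e powr (\<alpha>/2) * ((U y) powr (-\<alpha>) * Ux y)
              + D1 * Ux y
              - chi1 * ((U y)^3 / ((U y)^2 + e) * Vx y))"
  define G where "G = (\<lambda>y. - e * ((V y)^4 / ((V y)^2 + e) * Vxxx y)
              + e powr (\<alpha>/2) * ((V y) powr (-\<alpha>) * Vx y)
              + D2 * Vx y
              + chi2 * ((V y)^3 / ((V y)^2 + e) * Ux y))"
  have cF: "continuous_on {a..b} F" unfolding F_def
    by (intro continuous_intros) (auto simp: ne ne2)
  have cG: "continuous_on {a..b} G" unfolding G_def
    by (intro continuous_intros) (auto simp: ne ne2)

  define H where "H = (\<lambda>x. 1 - us / U x - us * e / (3 * (U x)^3))"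
  define H' where "H' = (\<lambda>x. (us / (U x)^2 + us * e / (U x)^4) * Ux x)"
  define K where "K = (\<lambda>x. 1 - vs / V x - vs * e / (3 * (V x)^3))"
  define K' where "K' = (\<lambda>x. (vs / (V x)^2 + vs * e / (V x)^4) * Vx x)"
  define gu where "gu = (\<lambda>x. 3 * (U x)^3 / (3 * (U x)^2 + e))"
  define gv where "gv = (\<lambda>x. 3 * (V x)^3 / (3 * (V x)^2 + e))"
  define Ru where "Ru = (\<lambda>x. lam1 - U x + a1 * V x)"
  define Rv where "Rv = (\<lambda>x. lam2 - V x - a2 * U x)"
  have cH: "continuous_on {a..b} H" "continuous_on {a..b} H'" "continuous_on {a..b} K" "continuous_on {a..b} K'"
    "continuous_on {a..b} gu" "continuous_on {a..b} gv" "continuous_on {a..b} Ru" "continuous_on {a..b} Rv"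
    unfolding H_def H'_def K_def K'_def gu_def gv_def Ru_def Rv_def
    by (intro continuous_intros; auto simp: ne ne2)+
  note cH[continuous_intros] cF[continuous_intros] cG[continuous_intros]
  have dH: "(H has_real_derivative H' x) (at x within {a..b})" if x: "x \<in> {a..b}" for x
    unfolding H_def H'_def
    apply (rule derivative_eq_intros dU[OF x] refl | simp add: ne[OF x])+
    using dHaux ne[OF x] by blast
  have dK: "(K has_real_derivative K' x) (at x within {a..b})" if x: "x \<in> {a..b}" for x
    unfolding K_def K'_def
    apply (rule derivative_eq_intros dV[OF x] refl | simp add: ne[OF x])+
    using dHaux ne[OF x] by blast
  have dF: "(F has_real_derivative (Ut x - gu x * Ru x)) (at x within {a..b})" if x: "x \<in> {a..b}" for x
    unfolding F_def gu_def Ru_def using pu[OF x] .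
  have dG: "(G has_real_derivative (Vt x - gv x * Rv x)) (at x within {a..b})" if x: "x \<in> {a..b}" for x
    unfolding G_def gv_def Rv_def using pv[OF x] .
  have F0: "F a = 0" "F b = 0" "G a = 0" "G b = 0" unfolding F_def G_def using bc by simp_all
  have ibpU: "integral {a..b} (\<lambda>x. H x * (Ut x - gu x * Ru x)) = - integral {a..b} (\<lambda>x. H' x * F x)"
    by (rule ibp0[where g'="\<lambda>x. Ut x - gu x * Ru x", OF _ dH dF])
       (use ab F0 in \<open>auto intro!: integrable_continuous_real continuous_intros\<close>)
  have ibpV: "integral {a..b} (\<lambda>x. K x * (Vt x - gv x * Rv x)) = - integral {a..b} (\<lambda>x. K' x * G x)"
    by (rule ibp0[where g'="\<lambda>x. Vt x - gv x * Rv x", OF _ dK dG])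
       (use ab F0 in \<open>auto intro!: integrable_continuous_real continuous_intros\<close>)
  have ibpU2: "integral {a..b} (\<lambda>x. Ux x * Uxxx x) = - integral {a..b} (\<lambda>x. Uxx x * Uxx x)"
    by (rule ibp0[OF _ dUx dUxx]) (use ab bc in \<open>auto intro!: integrable_continuous_real continuous_intros\<close>)
  have ibpV2: "integral {a..b} (\<lambda>x. Vx x * Vxxx x) = - integral {a..b} (\<lambda>x. Vxx x * Vxx x)"
    by (rule ibp0[OF _ dVx dVxx]) (use ab bc in \<open>auto intro!: integrable_continuous_real continuous_intros\<close>)
  have EU1: "integral {a..b} (\<lambda>x. (1 - us / U x) * Ut x) + us * e / 6 * integral {a..b} (\<lambda>x. - 2 / (U x)^3 * Ut x)
      = integral {a..b} (\<lambda>x. H x * Ut x)"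
  proof -
    have "integral {a..b} (\<lambda>x. H x * Ut x) = integral {a..b} (\<lambda>x. (1 - us / U x) * Ut x + us * e / 6 * (- 2 / (U x)^3 * Ut x))"
      by (rule integral_cong) (simp add: H_def field_simps ne)
    also have "\<dots> = integral {a..b} (\<lambda>x. (1 - us / U x) * Ut x) + integral {a..b} (\<lambda>x. us * e / 6 * (- 2 / (U x)^3 * Ut x))"
      by (rule integral_add) (auto intro!: integrable_continuous_real continuous_intros simp: ne)
    finally show ?thesis unfolding integral_mult_right by linarith
  qed
  have EV1: "integral {a..b} (\<lambda>x. (1 - vs / V x) * Vt x) + vs * e / 6 * integral {a..b} (\<lambda>x. - 2 / (V x)^3 * Vt x)
      = integral {a..b} (\<lambda>x. K x * Vt x)"
  proof -
    have "integral {a..b} (\<lambda>x. K x * Vt x) = integral {a..b} (\<lambda>x. (1 - vs / V x) * Vt x + vs * e / 6 * (- 2 / (V x)^3 * Vt x))"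
      by (rule integral_cong) (simp add: K_def field_simps ne)
    also have "\<dots> = integral {a..b} (\<lambda>x. (1 - vs / V x) * Vt x) + integral {a..b} (\<lambda>x. vs * e / 6 * (- 2 / (V x)^3 * Vt x))"
      by (rule integral_add) (auto intro!: integrable_continuous_real continuous_intros simp: ne)
    finally show ?thesis unfolding integral_mult_right by linarith
  qed
  define P1 where "P1 = (\<lambda>x. H x * gu x * Ru x)"
  define P2 where "P2 = (\<lambda>x. H' x * F x + us * e * (Ux x * Uxxx x))"
  define P3 where "P3 = (\<lambda>x. K x * gv x * Rv x)"
  define P4 where "P4 = (\<lambda>x. K' x * G x + vs * e * (Vx x * Vxxx x))"
  have EU2: "integral {a..b} (\<lambda>x. H x * Ut x) = integral {a..b} P1 - integral {a..b} P2 - us * e * integral {a..b} (\<lambda>x. Uxx x * Uxx x)"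
  proof -
    have "integral {a..b} (\<lambda>x. H x * Ut x) = integral {a..b} (\<lambda>x. H x * (Ut x - gu x * Ru x) + P1 x)"
      by (rule integral_cong) (simp add: P1_def algebra_simps)
    also have "\<dots> = integral {a..b} (\<lambda>x. H x * (Ut x - gu x * Ru x)) + integral {a..b} P1"
      by (rule integral_add) (auto intro!: integrable_continuous_real continuous_intros simp: P1_def)
    finally have s1: "integral {a..b} (\<lambda>x. H x * Ut x) = integral {a..b} (\<lambda>x. H x * (Ut x - gu x * Ru x)) + integral {a..b} P1" .
    have "integral {a..b} (\<lambda>x. H' x * F x) = integral {a..b} (\<lambda>x. P2 x - us * e * (Ux x * Uxxx x))"
      by (rule integral_cong) (simp add: P2_def)
    also have "\<dots> = integral {a..b} P2 - integral {a..b} (\<lambda>x. us * e * (Ux x * Uxxx x))"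
      by (rule integral_diff) (auto intro!: integrable_continuous_real continuous_intros simp: P2_def)
    finally have s2: "integral {a..b} (\<lambda>x. H' x * F x) = integral {a..b} P2 - integral {a..b} (\<lambda>x. us * e * (Ux x * Uxxx x))" .
    have s3: "us * e * integral {a..b} (\<lambda>x. Ux x * Uxxx x) = - (us * e * integral {a..b} (\<lambda>x. Uxx x * Uxx x))"
      unfolding ibpU2 by simp
    show ?thesis using s1 s2[unfolded integral_mult_right] s3 ibpU by linarith
  qed
  have EV2: "integral {a..b} (\<lambda>x. K x * Vt x) = integral {a..b} P3 - integral {a..b} P4 - vs * e * integral {a..b} (\<lambda>x. Vxx x * Vxx x)"
  proof -
    have "integral {a..b} (\<lambda>x. K x * Vt x) = integral {a..b} (\<lambda>x. K x * (Vt x - gv x * Rv x) + P3 x)"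
      by (rule integral_cong) (simp add: P3_def algebra_simps)
    also have "\<dots> = integral {a..b} (\<lambda>x. K x * (Vt x - gv x * Rv x)) + integral {a..b} P3"
      by (rule integral_add) (auto intro!: integrable_continuous_real continuous_intros simp: P3_def)
    finally have s1: "integral {a..b} (\<lambda>x. K x * Vt x) = integral {a..b} (\<lambda>x. K x * (Vt x - gv x * Rv x)) + integral {a..b} P3" .
    have "integral {a..b} (\<lambda>x. K' x * G x) = integral {a..b} (\<lambda>x. P4 x - vs * e * (Vx x * Vxxx x))"
      by (rule integral_cong) (simp add: P4_def)
    also have "\<dots> = integral {a..b} P4 - integral {a..b} (\<lambda>x. vs * e * (Vx x * Vxxx x))"
      by (rule integral_diff) (auto intro!: integrable_continuous_real continuous_intros simp: P4_def)
    finally have s2: "integral {a..b} (\<lambda>x. K' x * G x) = integral {a..b} P4 - integral {a..b} (\<lambda>x. vs * e * (Vx x * Vxxx x))" .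
    have s3: "vs * e * integral {a..b} (\<lambda>x. Vx x * Vxxx x) = - (vs * e * integral {a..b} (\<lambda>x. Vxx x * Vxx x))"
      unfolding ibpV2 by simp
    show ?thesis using s1 s2[unfolded integral_mult_right] s3 ibpV by linarith
  qed
  define Su where "Su = Sup ((\<lambda>x. \<bar>U x\<bar>) ` {a<..<b})"
  define Sv where "Sv = Sup ((\<lambda>x. \<bar>V x\<bar>) ` {a<..<b})"
  have Su: "(U x)^2 \<le> Su^2" if "x \<in> {a..b}" for x unfolding Su_def by (rule sup_sq[OF ab cont(1) that])
  have Sv: "(V x)^2 \<le> Sv^2" if "x \<in> {a..b}" for x unfolding Sv_def by (rule sup_sq[OF ab cont(6) that])
  define k1 where "k1 = (\<lambda>x. (Ux x)^2 / (U x)^2)"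
  define k2 where "k2 = (\<lambda>x. (Vx x)^2 / (V x)^2)"
  define k3 where "k3 = (\<lambda>x. (U x - us)^2)"
  define k4 where "k4 = (\<lambda>x. (V x - vs)^2)"
  define k5 where "k5 = (\<lambda>x. (U x) powr (-\<alpha> - 4) * (Ux x)^2)"
  define k6 where "k6 = (\<lambda>x. (V x) powr (-\<alpha> - 4) * (Vx x)^2)"
  define cu where "cu = D1 * us / 2 - A * chi2^2 * vs / (2 * D2) * Su^2"
  define cv where "cv = A * D2 * vs / 2 - chi1^2 * us / (2 * D1) * Sv^2"
  define c5 where "c5 = us * e powr ((\<alpha> + 2) / 2)"
  define c6 where "c6 = A * vs * e powr ((\<alpha> + 2) / 2)"
  define r1 where "r1 = (1 + a1) / (2 * sqrt 3) * sqrt e"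
  define r2 where "r2 = A / (2 * sqrt 3) * sqrt e"
  define W where "W = (\<lambda>x. P1 x - P2 x + A * (P3 x - P4 x) + cu * k1 x + cv * k2 x + k3 x + A * k4 x
       + c5 * k5 x + c6 * k6 x - (r1 * U x + r2 * V x))"
  have Wle: "W x \<le> 0" if x: "x \<in> {a..b}" for x
  proof -
    have "(1 - us / U x - us * e / (3 * (U x)^3)) * (3 * (U x)^3 / (3 * (U x)^2 + e)) * (lam1 - U x + a1 * V x)
    - ((us / (U x)^2 + us * e / (U x)^4) * Ux x * (-e * ((U x)^4 / ((U x)^2 + e) * Uxxx x) + e powr (\<alpha>/2) * ((U x) powr (-\<alpha>) * Ux x) + D1 * Ux x - chi1 * ((U x)^3 / ((U x)^2 + e) * Vx x)) + us * e * (Ux x * Uxxx x))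
    + A * ((1 - vs / V x - vs * e / (3 * (V x)^3)) * (3 * (V x)^3 / (3 * (V x)^2 + e)) * (lam2 - V x - a2 * U x)
    - ((vs / (V x)^2 + vs * e / (V x)^4) * Vx x * (-e * ((V x)^4 / ((V x)^2 + e) * Vxxx x) + e powr (\<alpha>/2) * ((V x) powr (-\<alpha>) * Vx x) + D2 * Vx x + chi2 * ((V x)^3 / ((V x)^2 + e) * Ux x)) + vs * e * (Vx x * Vxxx x)))
    + (D1 * us / 2 - A * chi2^2 * vs / (2 * D2) * Su^2) * ((Ux x)^2 / (U x)^2)
    + (A * D2 * vs / 2 - chi1^2 * us / (2 * D1) * Sv^2) * ((Vx x)^2 / (V x)^2)
    + (U x - us)^2 + A * (V x - vs)^2
    + us * e powr ((\<alpha> + 2) / 2) * ((U x) powr (-\<alpha> - 4) * (Ux x)^2)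
    + A * vs * e powr ((\<alpha> + 2) / 2) * ((V x) powr (-\<alpha> - 4) * (Vx x)^2)
    \<le> (1 + a1) / (2 * sqrt 3) * sqrt e * U x + A / (2 * sqrt 3) * sqrt e * V x"
      by (rule pointwise[OF Upos[OF x] Vpos[OF x] e pos lam A_def us_def vs_def Su[OF x] Sv[OF x]])
    then show ?thesis
      unfolding W_def P1_def P2_def P3_def P4_def H_def H'_def K_def K'_def F_def G_def gu_def gv_def Ru_def Rv_def
        k1_def k2_def k3_def k4_def k5_def k6_def cu_def cv_def c5_def c6_def r1_def r2_def
      by (simp only: mult.assoc)
  qed
  have ints: "P1 integrable_on {a..b}" "P2 integrable_on {a..b}" "P3 integrable_on {a..b}" "P4 integrable_on {a..b}"
    "k1 integrable_on {a..b}" "k2 integrable_on {a..b}" "k3 integrable_on {a..b}" "k4 integrable_on {a..b}"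
    "k5 integrable_on {a..b}" "k6 integrable_on {a..b}" "U integrable_on {a..b}" "V integrable_on {a..b}"
    unfolding P1_def P2_def P3_def P4_def k1_def k2_def k3_def k4_def k5_def k6_def
    by (auto intro!: integrable_continuous_real continuous_intros simp: ne)
  have hW: "(W has_integral (integral {a..b} P1 - integral {a..b} P2 + A * (integral {a..b} P3 - integral {a..b} P4)
       + cu * integral {a..b} k1 + cv * integral {a..b} k2 + integral {a..b} k3 + A * integral {a..b} k4
       + c5 * integral {a..b} k5 + c6 * integral {a..b} k6 - (r1 * integral {a..b} U + r2 * integral {a..b} V))) {a..b}"
    unfolding W_def
    by (intro has_integral_add has_integral_diff has_integral_mult_right hint ints)
  have "integral {a..b} W \<le> integral {a..b} (\<lambda>x. 0)"
    by (rule integral_le) (use hW Wle in \<open>auto\<close>)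
  then have Wneg: "integral {a..b} P1 - integral {a..b} P2 + A * (integral {a..b} P3 - integral {a..b} P4)
       + cu * integral {a..b} k1 + cv * integral {a..b} k2 + integral {a..b} k3 + A * integral {a..b} k4
       + c5 * integral {a..b} k5 + c6 * integral {a..b} k6 - (r1 * integral {a..b} U + r2 * integral {a..b} V) \<le> 0"
    using integral_unique[OF hW] by simp
  have nU: "0 \<le> integral {a..b} (\<lambda>x. Uxx x * Uxx x)" "0 \<le> integral {a..b} (\<lambda>x. Vxx x * Vxx x)"
    by (auto intro!: integral_nonneg integrable_continuous_real continuous_intros)
  have den: "1 + a1 * a2 > 0" using pos by (simp add: add_pos_pos)
  have us0: "us > 0" unfolding us_def using den pos by (simp add: add_pos_pos)
  have vs0: "vs > 0" unfolding vs_def using den lam by simp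
  have A0: "A > 0" using pos A_def by simp
  have n1: "0 \<le> us * e * integral {a..b} (\<lambda>x. Uxx x * Uxx x)" using nU us0 e by simp
  have n2: "0 \<le> A * (vs * e * integral {a..b} (\<lambda>x. Vxx x * Vxx x))" using nU vs0 e A0 by simp
  have EV3: "A * integral {a..b} (\<lambda>x. (1 - vs / V x) * Vt x) + A * vs * e / 6 * integral {a..b} (\<lambda>x. - 2 / (V x)^3 * Vt x)
     = A * (integral {a..b} P3 - integral {a..b} P4) - A * (vs * e * integral {a..b} (\<lambda>x. Vxx x * Vxx x))"
  proof -
    have "A * integral {a..b} (\<lambda>x. (1 - vs / V x) * Vt x) + A * vs * e / 6 * integral {a..b} (\<lambda>x. - 2 / (V x)^3 * Vt x)
      = A * (integral {a..b} (\<lambda>x. (1 - vs / V x) * Vt x) + vs * e / 6 * integral {a..b} (\<lambda>x. - 2 / (V x)^3 * Vt x))"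
      by (simp add: algebra_simps)
    also have "\<dots> = A * (integral {a..b} P3 - integral {a..b} P4 - vs * e * integral {a..b} (\<lambda>x. Vxx x * Vxx x))"
      unfolding EV1 EV2 ..
    finally show ?thesis by (simp add: algebra_simps)
  qed
  show ?thesis
    using Wneg EU1 EU2 EV3 n1 n2
    unfolding k1_def k2_def k3_def k4_def k5_def k6_def cu_def cv_def c5_def c6_def r1_def r2_def Su_def Sv_def
    by linarith
qed

theorem lemma8p2:
  fixes a b \<alpha> D1 D2 a1 a2 lam1 lam2 chi1 chi2 A us vs :: real
    and u0 u0x v0 v0x :: "real \<Rightarrow> real"
    and u0e v0e :: "real \<Rightarrow> real \<Rightarrow> real"
    and u ux uxx uxxx uxxxx ut v vx vxx vxxx vxxxx vt :: "real \<Rightarrow> real \<Rightarrow> real \<Rightarrow> real"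
    and E :: "real \<Rightarrow> real \<Rightarrow> real"
  assumes ab: "a < b"
    and alpha: "0 < \<alpha>" "\<alpha> \<le> 1/2"
    and pos: "D1 > 0" "D2 > 0" "a1 > 0" "a2 > 0" "lam1 > 0" "lam2 > 0" "chi1 > 0" "chi2 > 0"
    and lam: "lam2 > a2 * lam1"
    and IEu: "IE_data a b u0 u0x u0e"
    and IEv: "IE_data a b v0 v0x v0e"
    and reg_u: "\<forall>e\<in>{0<..<1}. classical_C41 a b (u e) (ux e) (uxx e) (uxxx e) (uxxxx e) (ut e)"
    and reg_v: "\<forall>e\<in>{0<..<1}. classical_C41 a b (v e) (vx e) (vxx e) (vxxx e) (vxxxx e) (vt e)"
    and pos_u: "\<forall>e\<in>{0<..<1}. \<forall>x\<in>{a..b}. \<forall>t\<ge>0. u e x t > 0"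
    and pos_v: "\<forall>e\<in>{0<..<1}. \<forall>x\<in>{a..b}. \<forall>t\<ge>0. v e x t > 0"
    and pde_u: "\<forall>e\<in>{0<..<1}. \<forall>t>0. \<forall>x\<in>{a..b}.
       ((\<lambda>y. - e * ((u e y t)^4 / ((u e y t)^2 + e) * uxxx e y t)
              + e powr (\<alpha>/2) * ((u e y t) powr (-\<alpha>) * ux e y t)
              + D1 * ux e y t
              - chi1 * ((u e y t)^3 / ((u e y t)^2 + e) * vx e y t))
        has_real_derivative
          (ut e x t - 3 * (u e x t)^3 / (3 * (u e x t)^2 + e) * (lam1 - u e x t + a1 * v e x t)))
       (at x within {a..b})"
    and pde_v: "\<forall>e\<in>{0<..<1}. \<forall>t>0. \<forall>x\<in>{a..b}.
       ((\<lambda>y. - e * ((v e y t)^4 / ((v e y t)^2 + e) * vxxx e y t)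
              + e powr (\<alpha>/2) * ((v e y t) powr (-\<alpha>) * vx e y t)
              + D2 * vx e y t
              + chi2 * ((v e y t)^3 / ((v e y t)^2 + e) * ux e y t))
        has_real_derivative
          (vt e x t - 3 * (v e x t)^3 / (3 * (v e x t)^2 + e) * (lam2 - v e x t - a2 * u e x t)))
       (at x within {a..b})"
    and bc: "\<forall>e\<in>{0<..<1}. \<forall>t>0. ux e a t = 0 \<and> ux e b t = 0 \<and> uxxx e a t = 0 \<and> uxxx e b t = 0 \<and>
                                  vx e a t = 0 \<and> vx e b t = 0 \<and> vxxx e a t = 0 \<and> vxxx e b t = 0"
    and init: "\<forall>e\<in>{0<..<1}. \<forall>x\<in>{a..b}. u e x 0 = u0e e x \<and> v e x 0 = v0e e x"
    and A_def: "A = a1 / a2"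
    and us_def: "us = (lam1 + a1 * lam2) / (1 + a1 * a2)"
    and vs_def: "vs = (lam2 - a2 * lam1) / (1 + a1 * a2)"
    and E_def: "E = (\<lambda>e t. integral {a..b} (\<lambda>x. phi us (u e x t))
                        + us * e / 6 * integral {a..b} (\<lambda>x. 1 / (u e x t)^2)
                        + A * integral {a..b} (\<lambda>x. phi vs (v e x t))
                        + A * vs * e / 6 * integral {a..b} (\<lambda>x. 1 / (v e x t)^2))"
  shows "\<forall>t>0. \<forall>e\<in>{0<..<1}. \<exists>E'. ((\<lambda>s. E e s) has_real_derivative E') (at t) \<and>
     E' + (D1 * us / 2 - A * chi2^2 * vs / (2 * D2) * (Sup ((\<lambda>x. \<bar>u e x t\<bar>) ` {a<..<b}))^2)
            * integral {a..b} (\<lambda>x. (ux e x t)^2 / (u e x t)^2)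
        + (A * D2 * vs / 2 - chi1^2 * us / (2 * D1) * (Sup ((\<lambda>x. \<bar>v e x t\<bar>) ` {a<..<b}))^2)
            * integral {a..b} (\<lambda>x. (vx e x t)^2 / (v e x t)^2)
        + integral {a..b} (\<lambda>x. (u e x t - us)^2) + A * integral {a..b} (\<lambda>x. (v e x t - vs)^2)
        + us * e powr ((\<alpha> + 2) / 2) * integral {a..b} (\<lambda>x. (u e x t) powr (-\<alpha> - 4) * (ux e x t)^2)
        + A * vs * e powr ((\<alpha> + 2) / 2) * integral {a..b} (\<lambda>x. (v e x t) powr (-\<alpha> - 4) * (vx e x t)^2)
     \<le> (1 + a1) / (2 * sqrt 3) * sqrt e * integral {a..b} (\<lambda>x. u e x t)
        + A / (2 * sqrt 3) * sqrt e * integral {a..b} (\<lambda>x. v e x t)"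
proof (intro allI impI ballI)
  fix t e :: real
  assume t: "t > 0" and eI: "e \<in> {0<..<1}"
  have e: "e > 0" using eI by simp
  have C: "classical_C41 a b (u e) (ux e) (uxx e) (uxxx e) (uxxxx e) (ut e)" using reg_u eI by blast
  have CV: "classical_C41 a b (v e) (vx e) (vxx e) (vxxx e) (vxxxx e) (vt e)" using reg_v eI by blast
  have sub: "{a..b} \<times> {0<..} \<subseteq> {a..b} \<times> {0::real..}" by auto
  have cu0: "continuous_on ({a..b} \<times> {0<..}) (\<lambda>(x,t). u e x t)"
    using C unfolding classical_C41_def by (auto intro: continuous_on_subset[OF _ sub])
  have cv0: "continuous_on ({a..b} \<times> {0<..}) (\<lambda>(x,t). v e x t)"
    using CV unfolding classical_C41_def by (auto intro: continuous_on_subset[OF _ sub])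
  have cC: "continuous_on ({a..b} \<times> {0<..}) (\<lambda>(x,t). ux e x t)"
    "continuous_on ({a..b} \<times> {0<..}) (\<lambda>(x,t). uxx e x t)"
    "continuous_on ({a..b} \<times> {0<..}) (\<lambda>(x,t). uxxx e x t)"
    "continuous_on ({a..b} \<times> {0<..}) (\<lambda>(x,t). ut e x t)"
    "continuous_on ({a..b} \<times> {0<..}) (\<lambda>(x,t). vx e x t)"
    "continuous_on ({a..b} \<times> {0<..}) (\<lambda>(x,t). vxx e x t)"
    "continuous_on ({a..b} \<times> {0<..}) (\<lambda>(x,t). vxxx e x t)"
    "continuous_on ({a..b} \<times> {0<..}) (\<lambda>(x,t). vt e x t)"
    using C CV unfolding classical_C41_def by auto
  have dC: "\<And>x s. x \<in> {a..b} \<Longrightarrow> s > 0 \<Longrightarrow>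
        ((\<lambda>y. u e y s) has_real_derivative ux e x s) (at x within {a..b}) \<and>
        ((\<lambda>y. ux e y s) has_real_derivative uxx e x s) (at x within {a..b}) \<and>
        ((\<lambda>y. uxx e y s) has_real_derivative uxxx e x s) (at x within {a..b}) \<and>
        ((\<lambda>s. u e x s) has_real_derivative ut e x s) (at s)"
    using C unfolding classical_C41_def by blast
  have dCV: "\<And>x s. x \<in> {a..b} \<Longrightarrow> s > 0 \<Longrightarrow>
        ((\<lambda>y. v e y s) has_real_derivative vx e x s) (at x within {a..b}) \<and>
        ((\<lambda>y. vx e y s) has_real_derivative vxx e x s) (at x within {a..b}) \<and>
        ((\<lambda>y. vxx e y s) has_real_derivative vxxx e x s) (at x within {a..b}) \<and>
        ((\<lambda>s. v e x s) has_real_derivative vt e x s) (at s)"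
    using CV unfolding classical_C41_def by blast
  have up: "\<And>x s. x \<in> {a..b} \<Longrightarrow> s > 0 \<Longrightarrow> u e x s > 0" using pos_u eI by auto
  have vp: "\<And>x s. x \<in> {a..b} \<Longrightarrow> s > 0 \<Longrightarrow> v e x s > 0" using pos_v eI by auto
  have den: "1 + a1 * a2 > 0" using pos by (simp add: add_pos_pos)
  have us0: "us > 0" unfolding us_def using den pos by (simp add: add_pos_pos)
  have vs0: "vs > 0" unfolding vs_def using den lam by simp
  have dphi: "\<And>c y. c > 0 \<Longrightarrow> y > 0 \<Longrightarrow> (phi c has_real_derivative (\<lambda>y. 1 - c / y) y) (at y)"
    unfolding phi_def
    by (rule derivative_eq_intros refl | simp add: field_simps)+
  have dinv: "\<And>y. y > 0 \<Longrightarrow> ((\<lambda>y. 1 / y^2) has_real_derivative (\<lambda>y. - 2 / y^3) y) (at y)"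
    by (rule derivative_eq_intros refl | simp add: field_simps eval_nat_numeral)+
  have cphi: "\<And>c. continuous_on {0<..} (\<lambda>y::real. 1 - c / y)"
    by (intro continuous_intros) auto
  have cinv: "continuous_on {0<..} (\<lambda>y::real. - 2 / y^3)"
    by (intro continuous_intros) auto
  have d1: "((\<lambda>s. integral {a..b} (\<lambda>x. phi us (u e x s))) has_real_derivative
      integral {a..b} (\<lambda>x. (1 - us / u e x t) * ut e x t)) (at t)"
    using leib[where \<Phi> = "phi us" and \<Phi>' = "\<lambda>y. 1 - us / y", OF cu0 cC(4) _ up dphi[OF us0] cphi t] dC
    by auto
  have d2: "((\<lambda>s. integral {a..b} (\<lambda>x. 1 / (u e x s)^2)) has_real_derivative
      integral {a..b} (\<lambda>x. - 2 / (u e x t)^3 * ut e x t)) (at t)"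
    using leib[where \<Phi> = "\<lambda>y. 1 / y^2" and \<Phi>' = "\<lambda>y. - 2 / y^3", OF cu0 cC(4) _ up dinv cinv t] dC
    by auto
  have d3: "((\<lambda>s. integral {a..b} (\<lambda>x. phi vs (v e x s))) has_real_derivative
      integral {a..b} (\<lambda>x. (1 - vs / v e x t) * vt e x t)) (at t)"
    using leib[where \<Phi> = "phi vs" and \<Phi>' = "\<lambda>y. 1 - vs / y", OF cv0 cC(8) _ vp dphi[OF vs0] cphi t] dCV
    by auto
  have d4: "((\<lambda>s. integral {a..b} (\<lambda>x. 1 / (v e x s)^2)) has_real_derivative
      integral {a..b} (\<lambda>x. - 2 / (v e x t)^3 * vt e x t)) (at t)"
    using leib[where \<Phi> = "\<lambda>y. 1 / y^2" and \<Phi>' = "\<lambda>y. - 2 / y^3", OF cv0 cC(8) _ vp dinv cinv t] dCV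
    by auto
  have dE: "((\<lambda>s. E e s) has_real_derivative
      (integral {a..b} (\<lambda>x. (1 - us / u e x t) * ut e x t) + us * e / 6 * integral {a..b} (\<lambda>x. - 2 / (u e x t)^3 * ut e x t)
          + A * integral {a..b} (\<lambda>x. (1 - vs / v e x t) * vt e x t) + A * vs * e / 6 * integral {a..b} (\<lambda>x. - 2 / (v e x t)^3 * vt e x t))) (at t)"
    unfolding E_def by (intro DERIV_add DERIV_cmult d1 d2 d3 d4)
  have slice: "continuous_on {a..b} (\<lambda>x. w x t)" if "continuous_on ({a..b} \<times> {0<..}) (\<lambda>(x,t). w x t)" for w
  proof -
    have "continuous_on {a..b} (\<lambda>x. (\<lambda>(x,t). w x t) (x, t))"
      by (rule continuous_on_compose2[OF that]) (use t in \<open>auto intro!: continuous_intros\<close>)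
    then show ?thesis by simp
  qed
  have bcs: "ux e a t = 0 \<and> ux e b t = 0 \<and> uxxx e a t = 0 \<and> uxxx e b t = 0 \<and>
             vx e a t = 0 \<and> vx e b t = 0 \<and> vxxx e a t = 0 \<and> vxxx e b t = 0" using bc eI t by blast
  have main: "(integral {a..b} (\<lambda>x. (1 - us / u e x t) * ut e x t) + us * e / 6 * integral {a..b} (\<lambda>x. - 2 / (u e x t)^3 * ut e x t)
          + A * integral {a..b} (\<lambda>x. (1 - vs / v e x t) * vt e x t) + A * vs * e / 6 * integral {a..b} (\<lambda>x. - 2 / (v e x t)^3 * vt e x t))
     + (D1 * us / 2 - A * chi2^2 * vs / (2 * D2) * (Sup ((\<lambda>x. \<bar>u e x t\<bar>) ` {a<..<b}))^2)
            * integral {a..b} (\<lambda>x. (ux e x t)^2 / (u e x t)^2)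
        + (A * D2 * vs / 2 - chi1^2 * us / (2 * D1) * (Sup ((\<lambda>x. \<bar>v e x t\<bar>) ` {a<..<b}))^2)
            * integral {a..b} (\<lambda>x. (vx e x t)^2 / (v e x t)^2)
        + integral {a..b} (\<lambda>x. (u e x t - us)^2) + A * integral {a..b} (\<lambda>x. (v e x t - vs)^2)
        + us * e powr ((\<alpha> + 2) / 2) * integral {a..b} (\<lambda>x. (u e x t) powr (-\<alpha> - 4) * (ux e x t)^2)
        + A * vs * e powr ((\<alpha> + 2) / 2) * integral {a..b} (\<lambda>x. (v e x t) powr (-\<alpha> - 4) * (vx e x t)^2)
     \<le> (1 + a1) / (2 * sqrt 3) * sqrt e * integral {a..b} (\<lambda>x. u e x t)
        + A / (2 * sqrt 3) * sqrt e * integral {a..b} (\<lambda>x. v e x t)"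
  proof (rule core[where U = "\<lambda>x. u e x t" and Ux = "\<lambda>x. ux e x t" and Uxx = "\<lambda>x. uxx e x t"
        and Uxxx = "\<lambda>x. uxxx e x t" and Ut = "\<lambda>x. ut e x t"
        and V = "\<lambda>x. v e x t" and Vx = "\<lambda>x. vx e x t" and Vxx = "\<lambda>x. vxx e x t"
        and Vxxx = "\<lambda>x. vxxx e x t" and Vt = "\<lambda>x. vt e x t",
        OF ab e pos lam A_def us_def vs_def])
    show "continuous_on {a..b} (\<lambda>x. u e x t)" by (rule slice[OF cu0])
    show "continuous_on {a..b} (\<lambda>x. v e x t)" by (rule slice[OF cv0])
    show "continuous_on {a..b} (\<lambda>x. ux e x t)" by (rule slice[OF cC(1)])
    show "continuous_on {a..b} (\<lambda>x. uxx e x t)" by (rule slice[OF cC(2)])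
    show "continuous_on {a..b} (\<lambda>x. uxxx e x t)" by (rule slice[OF cC(3)])
    show "continuous_on {a..b} (\<lambda>x. ut e x t)" by (rule slice[OF cC(4)])
    show "continuous_on {a..b} (\<lambda>x. vx e x t)" by (rule slice[OF cC(5)])
    show "continuous_on {a..b} (\<lambda>x. vxx e x t)" by (rule slice[OF cC(6)])
    show "continuous_on {a..b} (\<lambda>x. vxxx e x t)" by (rule slice[OF cC(7)])
    show "continuous_on {a..b} (\<lambda>x. vt e x t)" by (rule slice[OF cC(8)])
  qed (use up vp dC dCV t bcs pde_u pde_v eI in auto)
  show "\<exists>E'. ((\<lambda>s. E e s) has_real_derivative E') (at t) \<and>
     E' + (D1 * us / 2 - A * chi2^2 * vs / (2 * D2) * (Sup ((\<lambda>x. \<bar>u e x t\<bar>) ` {a<..<b}))^2)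
            * integral {a..b} (\<lambda>x. (ux e x t)^2 / (u e x t)^2)
        + (A * D2 * vs / 2 - chi1^2 * us / (2 * D1) * (Sup ((\<lambda>x. \<bar>v e x t\<bar>) ` {a<..<b}))^2)
            * integral {a..b} (\<lambda>x. (vx e x t)^2 / (v e x t)^2)
        + integral {a..b} (\<lambda>x. (u e x t - us)^2) + A * integral {a..b} (\<lambda>x. (v e x t - vs)^2)
        + us * e powr ((\<alpha> + 2) / 2) * integral {a..b} (\<lambda>x. (u e x t) powr (-\<alpha> - 4) * (ux e x t)^2)
        + A * vs * e powr ((\<alpha> + 2) / 2) * integral {a..b} (\<lambda>x. (v e x t) powr (-\<alpha> - 4) * (vx e x t)^2)
     \<le> (1 + a1) / (2 * sqrt 3) * sqrt e * integral {a..b} (\<lambda>x. u e x t)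
        + A / (2 * sqrt 3) * sqrt e * integral {a..b} (\<lambda>x. v e x t)"
    using dE main by blast
qed

end
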